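(* Let $H=H_0+\sum_{i=1}^{N_c}J_iV_i$ on $N_q$ qubits with $H_0=-\sum_{n=1}^{N_q}h_nZ_n$, all $h_n>0$, and each $V_i\in\{I,X,Y,Z\}^{\otimes N_q}$. For $\vec{J}=(J_1,\dots,J_{N_c})$ in a neighbourhood of $0$ let $|E_0\rangle$ be the ground state of $H$, normalized and with phase chosen so that $\langle\vec{0}|E_0\rangle>0$, and expand it as a Taylor series $|E_0\rangle=\sum_{\vec{k}\in\mathbb{N}^{N_c}}\vec{J}^{\cdot\vec{k}}|\Psi_{\vec{k}}\rangle$. Then for every $\vec{k}\in\mathbb{N}^{N_c}$ there is a real number $C_{\vec{k}}$ with $|\Psi_{\vec{k}}\rangle=C_{\vec{k}}\,\vec{V}^{\cdot\vec{k}}|\vec{0}\rangle$.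
   Context: $|\vec{0}\rangle$ is the computational basis state with all qubits in $|0\rangle$ (the unique ground state of $H_0$). $\mathbb{N}$ includes $0$. For a vector of numbers $\vec{a}$ and $\vec{k}\in\mathbb{N}^{N_c}$, $\vec{a}^{\cdot\vec{k}}=\prod_i a_i^{k_i}$; for the vector of operators $\vec{V}=(V_1,\dots,V_{N_c})$, $\vec{V}^{\cdot\vec{k}}=V_{N_c}^{k_{N_c}}\cdots V_2^{k_2}V_1^{k_1}$ (product ordered right-to-left). *)

theory Defs
  imports "HOL-Analysis.Analysis"
begin

text \<open>Qubits are indexed 0..<Nq, couplings 0..<Nc (the paper uses 1-based indices).
  A computational basis state is a bit assignment nat => bool that is False outside
  0..<Nq; bit False = |0>, bit True = |1>.\<close>

datatype pauli = PI | PX | PY | PZ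

type_synonym bstate = "nat \<Rightarrow> bool"
type_synonym qstate = "bstate \<Rightarrow> complex"

definition bstates :: "nat \<Rightarrow> bstate set" where
  "bstates Nq = {b. \<forall>n. Nq \<le> n \<longrightarrow> \<not> b n}"

definition zero_bstate :: bstate where
  "zero_bstate = (\<lambda>n. False)"

definition ket0 :: qstate where
  "ket0 = (\<lambda>b. if b = zero_bstate then 1 else 0)"

definition supported :: "nat \<Rightarrow> qstate \<Rightarrow> bool" where
  "supported Nq \<psi> \<longleftrightarrow> (\<forall>b. b \<notin> bstates Nq \<longrightarrow> \<psi> b = 0)"

definition sq_norm_state :: "nat \<Rightarrow> qstate \<Rightarrow> real" where
  "sq_norm_state Nq \<psi> = (\<Sum>b\<in>bstates Nq. (cmod (\<psi> b))^2)"

fun pauli_flips :: "pauli \<Rightarrow> bool" where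
  "pauli_flips PI = False"
| "pauli_flips PX = True"
| "pauli_flips PY = True"
| "pauli_flips PZ = False"

text \<open>Phase picked up by a single-qubit Pauli acting on input bit:
  X|b> = |1-b>, Y|0> = i|1>, Y|1> = -i|0>, Z|0> = |0>, Z|1> = -|1>.\<close>
fun pauli_phase :: "pauli \<Rightarrow> bool \<Rightarrow> complex" where
  "pauli_phase PI _ = 1"
| "pauli_phase PX _ = 1"
| "pauli_phase PY b = (if b then - \<i> else \<i>)"
| "pauli_phase PZ b = (if b then -1 else 1)"

definition flip_bits :: "nat \<Rightarrow> (nat \<Rightarrow> pauli) \<Rightarrow> bstate \<Rightarrow> bstate" where
  "flip_bits Nq P b = (\<lambda>n. if n < Nq \<and> pauli_flips (P n) then \<not> b n else b n)"

definition pauli_op :: "nat \<Rightarrow> (nat \<Rightarrow> pauli) \<Rightarrow> qstate \<Rightarrow> qstate" where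
  "pauli_op Nq P \<psi> =
     (\<lambda>b'. (\<Prod>n<Nq. pauli_phase (P n) (flip_bits Nq P b' n)) * \<psi> (flip_bits Nq P b'))"

definition H0_op :: "nat \<Rightarrow> (nat \<Rightarrow> real) \<Rightarrow> qstate \<Rightarrow> qstate" where
  "H0_op Nq h \<psi> = (\<lambda>b. - of_real (\<Sum>n<Nq. h n * (if b n then -1 else 1)) * \<psi> b)"

definition ham_op :: "nat \<Rightarrow> nat \<Rightarrow> (nat \<Rightarrow> real) \<Rightarrow> (nat \<Rightarrow> nat \<Rightarrow> pauli)
    \<Rightarrow> (nat \<Rightarrow> real) \<Rightarrow> qstate \<Rightarrow> qstate" where
  "ham_op Nq Nc h V J \<psi> =
     (\<lambda>b. H0_op Nq h \<psi> b + (\<Sum>i<Nc. of_real (J i) * pauli_op Nq (V i) \<psi> b))"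

definition is_ground_state :: "nat \<Rightarrow> (qstate \<Rightarrow> qstate) \<Rightarrow> qstate \<Rightarrow> bool" where
  "is_ground_state Nq H \<psi> \<longleftrightarrow>
     supported Nq \<psi> \<and> sq_norm_state Nq \<psi> = 1 \<and>
     (\<exists>E::real. H \<psi> = (\<lambda>b. of_real E * \<psi> b) \<and>
        (\<forall>(\<mu>::complex) \<phi>. supported Nq \<phi> \<and> \<phi> \<noteq> (\<lambda>_. 0) \<and> H \<phi> = (\<lambda>b. \<mu> * \<phi> b)
              \<longrightarrow> E \<le> Re \<mu>))"

definition multi_indices :: "nat \<Rightarrow> (nat \<Rightarrow> nat) set" where
  "multi_indices Nc = {k. \<forall>i. Nc \<le> i \<longrightarrow> k i = 0}"

definition mono_pow :: "nat \<Rightarrow> (nat \<Rightarrow> real) \<Rightarrow> (nat \<Rightarrow> nat) \<Rightarrow> real" where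
  "mono_pow Nc J k = (\<Prod>i<Nc. J i ^ k i)"

text \<open>vpow Nq V k m psi = V_(m-1)^(k_(m-1)) ... V_1^(k_1) V_0^(k_0) psi
  (rightmost factor applied first).\<close>
primrec vpow :: "nat \<Rightarrow> (nat \<Rightarrow> nat \<Rightarrow> pauli) \<Rightarrow> (nat \<Rightarrow> nat) \<Rightarrow> nat \<Rightarrow> qstate \<Rightarrow> qstate" where
  "vpow Nq V k 0 \<psi> = \<psi>"
| "vpow Nq V k (Suc m) \<psi> = (pauli_op Nq (V m) ^^ k m) (vpow Nq V k m \<psi>)"

end

theory Submission
  imports Defs "HOL-Real_Asymp.Real_Asymp"
begin


lemma pow1_uniq:
  fixes g :: "nat \<Rightarrow> complex" and d :: real
  assumes d: "d > 0"
    and hs: "\<And>t::real. \<bar>t\<bar> < d \<Longrightarrow> ((\<lambda>j. of_real (t^j) * g j) has_sum 0) UNIV"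
  shows "g m = 0"
proof -
  have sm: "(\<lambda>j. g j * (of_real t)^j) sums 0" if "\<bar>t\<bar> < d" for t
    using has_sum_imp_sums[OF hs[OF that]] by (simp add: mult.commute)
  have "\<forall>j<n. g j = 0" for n
  proof (induction n)
    case 0 then show ?case by simp
  next
    case (Suc n)
    define m where "m = n"
    have zm: "g m = 0"
    proof -
      define F where "F x = (\<Sum>n. g (n+m) * x^n)" for x :: complex
      have sF: "(\<lambda>n. g (n+m) * (of_real t)^n) sums 0" if "\<bar>t\<bar> < d" "t \<noteq> 0" for t
      proof -
        have "(\<lambda>i. g (i+m) * (of_real t)^(i+m)) sums 0"
          using sums_zero_iff_shift[of m "\<lambda>j. g j * (of_real t)^j" 0] Suc.IH sm[OF that(1)] by (simp add: m_def)
        then have "(\<lambda>i. (of_real t)^m * (g (i+m) * (of_real t)^i)) sums 0"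
          by (simp add: power_add algebra_simps)
        from sums_mult_D[OF this] that show ?thesis by simp
      qed
      have summ: "summable (\<lambda>n. g (n+m) * (of_real (d/2))^n)"
      proof -
        have "summable (\<lambda>n. g n * (of_real (d/2))^n)" using sm[of "d/2"] d sums_summable by auto
        then show ?thesis using summable_powser_ignore_initial_segment by blast
      qed
      have cont: "isCont F 0"
        unfolding F_def
        by (rule isCont_powser[OF summ]) (use d in simp)
      define x where "x k = complex_of_real (d / (2 * (real k + 2)))" for k
      have x0: "x \<longlonglongrightarrow> 0"
      proof -
        have "(\<lambda>k. d / (2 * (real k + 2))) \<longlonglongrightarrow> 0"
          by real_asymp
        then have "(\<lambda>k. complex_of_real (d / (2 * (real k + 2)))) \<longlonglongrightarrow> complex_of_real 0"
          by (rule tendsto_of_real)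
        then show ?thesis unfolding x_def by simp
      qed
      have Fx: "F (x k) = 0" for k
      proof -
        have "\<bar>d / (2 * (real k + 2))\<bar> < d" "d / (2 * (real k + 2)) \<noteq> 0" using d by (auto simp: field_simps add_pos_nonneg)
        from sums_unique[OF sF[OF this]] show ?thesis unfolding F_def x_def by simp
      qed
      have "(\<lambda>k. F (x k)) \<longlonglongrightarrow> F 0"
        using cont x0 isCont_tendsto_compose by blast
      then have "(\<lambda>k. 0) \<longlonglongrightarrow> F 0" by (simp add: Fx)
      then have "F 0 = 0" using LIMSEQ_unique tendsto_const by blast
      moreover have "F 0 = g m" unfolding F_def using powser_zero[of "\<lambda>n. g (n+m)"] by simp
      ultimately show ?thesis by simp
    qed
    show ?case using Suc.IH zm less_Suc_eq m_def by auto
  qed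
  from this[of "Suc m"] show ?thesis by auto
qed


lemma mono_pow_upd: "mono_pow (Suc N) J (k(N:=j)) = mono_pow N J k * J N ^ j"
  unfolding mono_pow_def by (simp add: prod.lessThan_Suc)

lemma mono_pow_updJ: "mono_pow N (J(N:=t)) k = mono_pow N J k"
  unfolding mono_pow_def by (intro prod.cong) auto

lemma multi_uniq:
  fixes c :: "(nat \<Rightarrow> nat) \<Rightarrow> complex" and d :: real
  assumes d: "d > 0"
    and hs: "\<And>J. (\<forall>i<N. \<bar>J i\<bar> < d) \<Longrightarrow> ((\<lambda>k. of_real (mono_pow N J k) * c k) has_sum 0) (multi_indices N)"
  shows "\<forall>k\<in>multi_indices N. c k = 0"
  using hs
proof (induction N arbitrary: c)
  case 0
  have mi: "multi_indices 0 = {\<lambda>_. 0}" unfolding multi_indices_def by auto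
  from "0.prems"[of "\<lambda>_. 0"] have "(c has_sum 0) {\<lambda>_. 0}" by (simp add: mi mono_pow_def)
  moreover have "(c has_sum c (\<lambda>_. 0)) {\<lambda>_. 0}" using has_sum_finite[of "{\<lambda>_. 0}" c] by simp
  ultimately show ?case using has_sum_unique mi by fastforce
next
  case (Suc N)
  have bij: "bij_betw (\<lambda>(j,k'). k'(N:=j)) (UNIV \<times> multi_indices N) (multi_indices (Suc N))"
  proof (rule bij_betwI[where g = "\<lambda>k. (k N, k(N:=0))"])
    show "(\<lambda>(j,k'). k'(N:=j)) \<in> UNIV \<times> multi_indices N \<rightarrow> multi_indices (Suc N)"
      by (auto simp: multi_indices_def)
    show "(\<lambda>k. (k N, k(N:=0))) \<in> multi_indices (Suc N) \<rightarrow> UNIV \<times> multi_indices N"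
      by (auto simp: multi_indices_def)
    show "(\<lambda>k. (k N, k(N := 0))) ((\<lambda>(j,k'). k'(N:=j)) x) = x" if "x \<in> UNIV \<times> multi_indices N" for x
      using that by (auto simp: multi_indices_def)
    show "(\<lambda>(j,k'). k'(N:=j)) ((\<lambda>k. (k N, k(N := 0))) y) = y" for y
      by auto
  qed
  have prod: "((\<lambda>(j,k'). of_real (t^j) * (of_real (mono_pow N J k') * c (k'(N:=j)))) has_sum 0)
      (UNIV \<times> multi_indices N)" if J: "\<forall>i<N. \<bar>J i\<bar> < d" and t: "\<bar>t\<bar> < d" for J t
  proof -
    have "\<forall>i<Suc N. \<bar>(J(N:=t)) i\<bar> < d" using J t by (auto simp: less_Suc_eq)
    from Suc.prems[OF this] have "((\<lambda>k. of_real (mono_pow (Suc N) (J(N:=t)) k) * c k) has_sum 0) (multi_indices (Suc N))" .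
    then have "((\<lambda>x. (\<lambda>k. of_real (mono_pow (Suc N) (J(N:=t)) k) * c k) ((\<lambda>(j,k'). k'(N:=j)) x)) has_sum 0) (UNIV \<times> multi_indices N)"
      using has_sum_reindex_bij_betw[OF bij, of "\<lambda>k. of_real (mono_pow (Suc N) (J(N:=t)) k) * c k" 0] by simp
    then show ?thesis
      by (simp add: case_prod_unfold mono_pow_upd mono_pow_updJ mult_ac)
  qed
  show ?case
  proof
    fix k assume k: "k \<in> multi_indices (Suc N)"
    have inner: "\<forall>k'\<in>multi_indices N. c (k'(N:=j)) = 0" for j
    proof (rule Suc.IH)
      fix J :: "nat \<Rightarrow> real" assume J: "\<forall>i<N. \<bar>J i\<bar> < d"
      define a where "a j k' = of_real (mono_pow N J k') * c (k'(N:=j))" for j k'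
      have summ: "a j summable_on multi_indices N" for j
      proof -
        have "\<bar>d/2\<bar> < d" using d by simp
        from prod[OF J this] have "(\<lambda>(j,k'). of_real ((d/2)^j) * a j k') summable_on (UNIV \<times> multi_indices N)"
          unfolding a_def using has_sum_imp_summable by blast
        from summable_on_SigmaD1[OF this, of j] have "(\<lambda>k'. of_real ((d/2)^j) * a j k') summable_on multi_indices N"
          by simp
        moreover define cc where "cc = complex_of_real ((d/2)^j)"
        moreover have "cc \<noteq> 0" using d by (simp add: cc_def)
        ultimately have "(\<lambda>k'. inverse cc * (cc * a j k')) summable_on multi_indices N"
          using summable_on_cmult_right by blast
        moreover have "(\<lambda>k'. inverse cc * (cc * a j k')) = a j"
          using \<open>cc \<noteq> 0\<close> by (simp add: mult.assoc[symmetric])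
        ultimately show ?thesis by simp
      qed
      define g where "g j = infsum (a j) (multi_indices N)" for j
      have "g j = 0" for j
      proof (rule pow1_uniq[OF d])
        fix t :: real assume t: "\<bar>t\<bar> < d"
        show "((\<lambda>j. of_real (t^j) * g j) has_sum 0) UNIV"
        proof (rule has_sum_SigmaD)
          show "((\<lambda>(j,k'). of_real (t^j) * a j k') has_sum 0) (Sigma UNIV (\<lambda>_. multi_indices N))"
            using prod[OF J t] unfolding a_def by simp
          fix j :: nat
          show "((\<lambda>k'. (\<lambda>(j,k'). of_real (t^j) * a j k') (j, k')) has_sum of_real (t^j) * g j) (multi_indices N)"
            unfolding g_def using has_sum_cmult_right[OF has_sum_infsum[OF summ]] by simp
        qed
      qed
      then have "(a j has_sum 0) (multi_indices N)" using has_sum_infsum[OF summ] g_def by metis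
      then show "((\<lambda>k'. of_real (mono_pow N J k') * c (k'(N:=j))) has_sum 0) (multi_indices N)"
        unfolding a_def .
    qed
    have "k(N:=0) \<in> multi_indices N" using k by (auto simp: multi_indices_def)
    from inner[of "k N", rule_format, OF this] show "c k = 0" by simp
  qed
qed



definition sgnb :: "bool \<Rightarrow> complex" where "sgnb x = (if x then -1 else 1)"
definition Zop :: "nat \<Rightarrow> qstate \<Rightarrow> qstate" where "Zop n \<psi> = (\<lambda>b. sgnb (b n) * \<psi> b)"
definition cnjop :: "qstate \<Rightarrow> qstate" where "cnjop \<psi> = (\<lambda>b. cnj (\<psi> b))"
definition H0c :: "nat \<Rightarrow> (nat \<Rightarrow> real) \<Rightarrow> bstate \<Rightarrow> real" where
  "H0c Nq h b = - (\<Sum>n<Nq. h n * (if b n then -1 else 1))"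
definition tyr :: "nat \<Rightarrow> (nat \<Rightarrow> pauli) \<Rightarrow> real" where
  "tyr Nq P = (\<Prod>n<Nq. if P n = PY then -1 else 1)"
definition fzr :: "nat \<Rightarrow> (nat \<Rightarrow> pauli) \<Rightarrow> real" where
  "fzr n P = (if pauli_flips (P n) then -1 else 1)"

lemma sgnb_sq[simp]: "sgnb x * sgnb x = 1" by (simp add: sgnb_def)

lemma H0_op_H0c: "H0_op Nq h \<psi> = (\<lambda>b. of_real (H0c Nq h b) * \<psi> b)"
  unfolding H0_op_def H0c_def by simp

lemma ham_op_alt: "ham_op Nq Nc h V J \<psi> b =
   of_real (H0c Nq h b) * \<psi> b + (\<Sum>i<Nc. of_real (J i) * pauli_op Nq (V i) \<psi> b)"
  unfolding ham_op_def H0_op_H0c by simp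

lemma finite_bstates: "finite (bstates Nq)"
proof -
  have "bstates Nq \<subseteq> (\<lambda>S n. n \<in> S) ` Pow {..<Nq}"
  proof
    fix b assume b: "b \<in> bstates Nq"
    have "b = (\<lambda>n. n \<in> {n. n < Nq \<and> b n})" using b leI unfolding bstates_def fun_eq_iff by blast
    then show "b \<in> (\<lambda>S n. n \<in> S) ` Pow {..<Nq}" by blast
  qed
  then show ?thesis by (rule finite_subset) auto
qed

lemma zero_in_bstates[simp]: "zero_bstate \<in> bstates Nq"
  by (simp add: bstates_def zero_bstate_def)

lemma flip_in_bstates: "b \<in> bstates Nq \<Longrightarrow> flip_bits Nq P b \<in> bstates Nq"
  by (auto simp: bstates_def flip_bits_def)

lemma flip_notin_bstates: "b \<notin> bstates Nq \<Longrightarrow> flip_bits Nq P b \<notin> bstates Nq"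
  by (auto simp: bstates_def flip_bits_def split: if_splits)

lemma flip_flip[simp]: "flip_bits Nq P (flip_bits Nq P b) = b"
  by (auto simp: flip_bits_def)

lemma norm_phase[simp]: "cmod (pauli_phase p x) = 1"
  by (cases p) auto

lemma norm_pauli_op: "cmod (pauli_op Nq P \<psi> b) = cmod (\<psi> (flip_bits Nq P b))"
  unfolding pauli_op_def by (simp add: norm_mult prod_norm[symmetric])

lemma pauli_op_supported: "supported Nq \<psi> \<Longrightarrow> supported Nq (pauli_op Nq P \<psi>)"
  unfolding supported_def pauli_op_def using flip_notin_bstates by auto

lemma pauli_op_scale: "pauli_op Nq P (\<lambda>b. c * \<psi> b) = (\<lambda>b. c * pauli_op Nq P \<psi> b)"
  unfolding pauli_op_def by (simp add: mult_ac)

lemma pauli_op_diff: "pauli_op Nq P (\<lambda>b. \<psi> b - \<phi> b) = (\<lambda>b. pauli_op Nq P \<psi> b - pauli_op Nq P \<phi> b)"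
  unfolding pauli_op_def by (simp add: algebra_simps)

lemma phase_sq: "pauli_phase p (if pauli_flips p then \<not> x else x) * pauli_phase p x = 1"
  by (cases p) auto

lemma pauli_op_invol: "pauli_op Nq P (pauli_op Nq P \<psi>) = \<psi>"
proof
  fix b
  have "(\<Prod>n<Nq. pauli_phase (P n) (flip_bits Nq P b n)) * (\<Prod>n<Nq. pauli_phase (P n) (b n)) = 1"
    unfolding prod.distrib[symmetric] by (rule prod.neutral) (auto simp: flip_bits_def phase_sq)
  then show "pauli_op Nq P (pauli_op Nq P \<psi>) b = \<psi> b"
    unfolding pauli_op_def by (simp add: mult.assoc[symmetric])
qed

lemma Zop_pauli: "n < Nq \<Longrightarrow> pauli_op Nq P (Zop n \<psi>) = (\<lambda>b. of_real (fzr n P) * Zop n (pauli_op Nq P \<psi>) b)"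
  unfolding pauli_op_def Zop_def fzr_def by (auto simp: flip_bits_def sgnb_def fun_eq_iff)

lemma cnj_phase: "cnj (pauli_phase p x) = (if p = PY then -1 else 1) * pauli_phase p x"
  by (cases p) auto

lemma cnj_pauli: "cnjop (pauli_op Nq P \<psi>) = (\<lambda>b. of_real (tyr Nq P) * pauli_op Nq P (cnjop \<psi>) b)"
proof
  fix b
  have "cnj (\<Prod>n<Nq. pauli_phase (P n) (flip_bits Nq P b n)) =
     (\<Prod>n<Nq. (if P n = PY then -1 else 1)) * (\<Prod>n<Nq. pauli_phase (P n) (flip_bits Nq P b n))"
    by (simp add: cnj_phase prod.distrib)
  moreover have "(\<Prod>n<Nq. (if P n = PY then -1 else 1 :: complex)) = of_real (tyr Nq P)"
    unfolding tyr_def of_real_prod by (intro prod.cong) auto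
  ultimately show "cnjop (pauli_op Nq P \<psi>) b = of_real (tyr Nq P) * pauli_op Nq P (cnjop \<psi>) b"
    unfolding cnjop_def pauli_op_def by (simp add: mult.assoc)
qed

lemma ham_Zop:
  assumes "n < Nq"
  shows "ham_op Nq Nc h V J (Zop n \<psi>) = Zop n (ham_op Nq Nc h V (\<lambda>i. fzr n (V i) * J i) \<psi>)"
proof
  fix b
  show "ham_op Nq Nc h V J (Zop n \<psi>) b = Zop n (ham_op Nq Nc h V (\<lambda>i. fzr n (V i) * J i) \<psi>) b"
    unfolding ham_op_alt Zop_pauli[OF assms]
    by (simp add: Zop_def algebra_simps sum_distrib_left)
qed

lemma ham_cnj:
  "cnjop (ham_op Nq Nc h V J \<psi>) = ham_op Nq Nc h V (\<lambda>i. tyr Nq (V i) * J i) (cnjop \<psi>)"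
proof
  fix b
  have "cnj (pauli_op Nq (V i) \<psi> b) = of_real (tyr Nq (V i)) * pauli_op Nq (V i) (cnjop \<psi>) b" for i
    using cnj_pauli[of Nq "V i" \<psi>] unfolding cnjop_def by metis
  then show "cnjop (ham_op Nq Nc h V J \<psi>) b = ham_op Nq Nc h V (\<lambda>i. tyr Nq (V i) * J i) (cnjop \<psi>) b"
    unfolding ham_op_alt by (simp add: cnjop_def mult_ac)
qed



lemma H0c_zero: "H0c Nq h zero_bstate = - (\<Sum>n<Nq. h n)"
  by (simp add: H0c_def zero_bstate_def)

lemma H0c_lower:
  assumes hm: "\<forall>n<Nq. hm \<le> h n" "hm > 0" and b: "b \<in> bstates Nq" "b \<noteq> zero_bstate"
  shows "H0c Nq h b \<ge> - (\<Sum>n<Nq. h n) + 2 * hm"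
proof -
  obtain n0 where n0: "b n0" using b(2) by (auto simp: zero_bstate_def fun_eq_iff)
  then have n0l: "n0 < Nq" using b(1) by (auto simp: bstates_def not_less[symmetric])
  have "H0c Nq h b + (\<Sum>n<Nq. h n) = (\<Sum>n<Nq. h n - h n * (if b n then -1 else 1))"
    unfolding H0c_def by (simp add: sum_subtractf)
  also have "\<dots> = (\<Sum>n<Nq. if b n then 2 * h n else 0)" by (rule sum.cong) auto
  also have "\<dots> \<ge> (if b n0 then 2 * h n0 else 0)"
    by (rule member_le_sum) (use hm n0l in \<open>auto intro: order_trans[OF less_imp_le[OF hm(2)]]\<close>)
  finally show ?thesis using n0 hm n0l by auto
qed

lemma eig_zero:
  fixes hm E :: real
  assumes hm: "\<forall>n<Nq. hm \<le> h n" "hm > 0"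
    and e: "ham_op Nq Nc h V J \<psi> = (\<lambda>b. of_real E * \<psi> b)"
    and Ebd: "E + (\<Sum>n<Nq. h n) + (\<Sum>i<Nc. \<bar>J i\<bar>) < 2 * hm"
    and z: "\<psi> zero_bstate = 0"
  shows "\<forall>b\<in>bstates Nq. \<psi> b = 0"
proof (rule ccontr)
  assume "\<not> ?thesis"
  then obtain b0 where b0: "b0 \<in> bstates Nq" "\<psi> b0 \<noteq> 0" by auto
  define S where "S = bstates Nq"
  have fin: "finite ((\<lambda>b. cmod (\<psi> b)) ` S)" using finite_bstates S_def by auto
  have ne: "(\<lambda>b. cmod (\<psi> b)) ` S \<noteq> {}" using b0 S_def by auto
  obtain bm where bm: "bm \<in> S" "cmod (\<psi> bm) = Max ((\<lambda>b. cmod (\<psi> b)) ` S)"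
    using Max_in[OF fin ne] by auto
  have bmax: "cmod (\<psi> b) \<le> cmod (\<psi> bm)" if "b \<in> S" for b
    using Max_ge[OF fin] that bm(2) by auto
  have pos: "cmod (\<psi> bm) > 0" using bmax[of b0] b0 S_def by auto
  then have bmz: "bm \<noteq> zero_bstate" using z by auto
  have low: "H0c Nq h bm \<ge> - (\<Sum>n<Nq. h n) + 2 * hm"
    using H0c_lower[OF hm _ bmz] bm(1) S_def by auto
  have eq: "of_real (H0c Nq h bm - E) * \<psi> bm = - (\<Sum>i<Nc. of_real (J i) * pauli_op Nq (V i) \<psi> bm)"
    using fun_cong[OF e, of bm] unfolding ham_op_alt by (simp add: algebra_simps)
  have "norm (\<Sum>i<Nc. of_real (J i) * pauli_op Nq (V i) \<psi> bm) \<le> (\<Sum>i<Nc. norm (of_real (J i) * pauli_op Nq (V i) \<psi> bm))"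
    by (rule norm_sum)
  also have "\<dots> \<le> (\<Sum>i<Nc. \<bar>J i\<bar> * cmod (\<psi> bm))"
  proof (rule sum_mono)
    fix i assume "i \<in> {..<Nc}"
    have "flip_bits Nq (V i) bm \<in> S" using flip_in_bstates bm(1) S_def by auto
    then show "norm (of_real (J i) * pauli_op Nq (V i) \<psi> bm) \<le> \<bar>J i\<bar> * cmod (\<psi> bm)"
      by (simp add: norm_mult norm_pauli_op bmax mult_left_mono)
  qed
  also have "\<dots> = (\<Sum>i<Nc. \<bar>J i\<bar>) * cmod (\<psi> bm)" by (simp add: sum_distrib_right)
  finally have "\<bar>H0c Nq h bm - E\<bar> * cmod (\<psi> bm) \<le> (\<Sum>i<Nc. \<bar>J i\<bar>) * cmod (\<psi> bm)"
    using arg_cong[OF eq, of norm] by (simp add: norm_mult del: of_real_diff)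
  then have "\<bar>H0c Nq h bm - E\<bar> \<le> (\<Sum>i<Nc. \<bar>J i\<bar>)" using pos by simp
  then show False using low Ebd hm by linarith
qed

lemma sq_norm_scale: "sq_norm_state Nq (\<lambda>b. c * \<psi> b) = (cmod c)^2 * sq_norm_state Nq \<psi>"
  unfolding sq_norm_state_def by (simp add: norm_mult power_mult_distrib sum_distrib_left)

lemma ham_scale: "ham_op Nq Nc h V J (\<lambda>b. c * \<psi> b) = (\<lambda>b. c * ham_op Nq Nc h V J \<psi> b)"
  unfolding ham_op_alt[abs_def] pauli_op_scale by (simp add: algebra_simps sum_distrib_left)

lemma ham_diff: "ham_op Nq Nc h V J (\<lambda>b. \<psi> b - \<phi> b) = (\<lambda>b. ham_op Nq Nc h V J \<psi> b - ham_op Nq Nc h V J \<phi> b)"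
  unfolding ham_op_alt[abs_def] pauli_op_diff by (simp add: algebra_simps sum_subtractf)

lemma eig_unique:
  fixes hm E :: real
  assumes hm: "\<forall>n<Nq. hm \<le> h n" "hm > 0"
    and s1: "supported Nq \<phi>1" and s2: "supported Nq \<phi>2"
    and n1: "sq_norm_state Nq \<phi>1 = 1" and n2: "sq_norm_state Nq \<phi>2 = 1"
    and e1: "ham_op Nq Nc h V J \<phi>1 = (\<lambda>b. of_real E * \<phi>1 b)"
    and e2: "ham_op Nq Nc h V J \<phi>2 = (\<lambda>b. of_real E * \<phi>2 b)"
    and Ebd: "E + (\<Sum>n<Nq. h n) + (\<Sum>i<Nc. \<bar>J i\<bar>) < 2 * hm"
    and z1: "Im (\<phi>1 zero_bstate) = 0" "Re (\<phi>1 zero_bstate) > 0"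
    and z2: "Im (\<phi>2 zero_bstate) = 0" "Re (\<phi>2 zero_bstate) > 0"
  shows "\<phi>1 = \<phi>2"
proof -
  define a1 a2 where "a1 = Re (\<phi>1 zero_bstate)" and "a2 = Re (\<phi>2 zero_bstate)"
  have pa1: "\<phi>1 zero_bstate = of_real a1" using z1 a1_def complex_eq_iff by auto
  have pa2: "\<phi>2 zero_bstate = of_real a2" using z2 a2_def complex_eq_iff by auto
  define c where "c = complex_of_real (a1 / a2)"
  define \<psi> where "\<psi> = (\<lambda>b. \<phi>1 b - c * \<phi>2 b)"
  have e\<psi>: "ham_op Nq Nc h V J \<psi> = (\<lambda>b. of_real E * \<psi> b)"
    unfolding \<psi>_def ham_diff ham_scale e1 e2 by (simp add: algebra_simps)
  have a2pos: "a2 > 0" using z2 a2_def by simp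
  have "a1 / a2 * a2 = a1" using a2pos by simp
  then have "c * \<phi>2 zero_bstate = \<phi>1 zero_bstate" unfolding c_def pa1 pa2
    by (metis of_real_mult)
  then have "\<psi> zero_bstate = 0" unfolding \<psi>_def by simp
  from eig_zero[OF hm e\<psi> Ebd this] have eqc: "\<phi>1 = (\<lambda>b. c * \<phi>2 b)"
    using s1 s2 unfolding \<psi>_def supported_def fun_eq_iff by (metis eq_iff_diff_eq_0 mult_zero_right)
  have "(cmod c)^2 = 1" using n1 n2 sq_norm_scale[of Nq c \<phi>2] eqc by simp
  moreover have rpos: "a1/a2 > 0" using z1 z2 a1_def a2_def by simp
  moreover have "cmod c = a1/a2" unfolding c_def norm_of_real using rpos by (simp only: abs_of_pos)
  ultimately have "(a1/a2)^2 = 1" by simp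
  then have "a1/a2 = 1" using rpos by (simp add: power2_eq_1_iff)
  then have "c = 1" unfolding c_def by simp
  then show ?thesis using eqc by simp
qed



lemma fzr_sq[simp]: "fzr n P * fzr n P = 1" by (simp add: fzr_def)
lemma fzr_abs[simp]: "\<bar>fzr n P\<bar> = 1" by (simp add: fzr_def)
lemma tyr_sq[simp]: "tyr Nq P * tyr Nq P = 1"
  unfolding tyr_def prod.distrib[symmetric] by (rule prod.neutral) auto
lemma tyr_abs[simp]: "\<bar>tyr Nq P\<bar> = 1"
  unfolding tyr_def abs_prod by (rule prod.neutral) auto

lemma ket0_supported: "supported Nq ket0"
  by (auto simp: supported_def ket0_def)

lemma Zop_ket0: "Zop n ket0 = ket0"
  by (auto simp: Zop_def ket0_def zero_bstate_def sgnb_def fun_eq_iff)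

lemma cnjop_ket0: "cnjop ket0 = ket0"
  by (auto simp: cnjop_def ket0_def fun_eq_iff)

lemma pauli_op_zero: "pauli_op Nq P (\<lambda>_. 0) = (\<lambda>_. 0)"
  by (simp add: pauli_op_def)

lemma vpow_supported: "supported Nq \<psi> \<Longrightarrow> supported Nq (vpow Nq V k m \<psi>)"
proof (induction m)
  case (Suc m)
  have "supported Nq ((pauli_op Nq (V m) ^^ j) (vpow Nq V k m \<psi>))" for j
    by (induction j) (use Suc pauli_op_supported in auto)
  then show ?case by simp
qed simp

lemma vpow_nonzero: "\<psi> \<noteq> (\<lambda>_. 0) \<Longrightarrow> vpow Nq V k m \<psi> \<noteq> (\<lambda>_. 0)"
proof (induction m)
  case (Suc m)
  have "(pauli_op Nq (V m) ^^ j) (vpow Nq V k m \<psi>) \<noteq> (\<lambda>_. 0)" for j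
  proof (induction j)
    case (Suc j)
    then show ?case using pauli_op_invol[of Nq "V m"] pauli_op_zero[of Nq "V m"] by (metis funpow.simps(2) o_apply)
  qed (use Suc in simp)
  then show ?case by simp
qed simp

lemma Zop_pauli': "n < Nq \<Longrightarrow> Zop n (pauli_op Nq P \<psi>) = (\<lambda>b. of_real (fzr n P) * pauli_op Nq P (Zop n \<psi>) b)"
  unfolding Zop_pauli by (simp add: mult.assoc[symmetric] of_real_mult[symmetric])

lemma Zop_scale: "Zop n (\<lambda>b. c * \<psi> b) = (\<lambda>b. c * Zop n \<psi> b)"
  by (simp add: Zop_def mult_ac)

lemma cnjop_scale: "cnjop (\<lambda>b. c * \<psi> b) = (\<lambda>b. cnj c * cnjop \<psi> b)"
  by (simp add: cnjop_def)

lemma funpow_scale: "(pauli_op Nq P ^^ j) (\<lambda>b. c * \<psi> b) = (\<lambda>b. c * (pauli_op Nq P ^^ j) \<psi> b)"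
  by (induction j) (simp_all add: pauli_op_scale)

lemma Zop_vpow:
  assumes "n < Nq"
  shows "Zop n (vpow Nq V k m \<psi>) = (\<lambda>b. of_real (\<Prod>i<m. fzr n (V i) ^ k i) * vpow Nq V k m (Zop n \<psi>) b)"
proof (induction m)
  case 0 then show ?case by simp
next
  case (Suc m)
  have "Zop n ((pauli_op Nq (V m) ^^ j) \<phi>) = (\<lambda>b. of_real (fzr n (V m) ^ j) * (pauli_op Nq (V m) ^^ j) (Zop n \<phi>) b)" for j \<phi>
  proof (induction j)
    case 0 then show ?case by simp
  next
    case (Suc j)
    show ?case
      by (simp add: Zop_pauli'[OF assms] Suc pauli_op_scale mult_ac)
  qed
  then show ?case
    by (simp add: Suc funpow_scale del: of_real_prod of_real_power; simp add: mult_ac)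
qed

lemma cnjop_pauli': "cnjop (pauli_op Nq P \<psi>) = (\<lambda>b. of_real (tyr Nq P) * pauli_op Nq P (cnjop \<psi>) b)"
  by (rule cnj_pauli)

lemma cnjop_vpow:
  "cnjop (vpow Nq V k m \<psi>) = (\<lambda>b. of_real (\<Prod>i<m. tyr Nq (V i) ^ k i) * vpow Nq V k m (cnjop \<psi>) b)"
proof (induction m)
  case 0 then show ?case by simp
next
  case (Suc m)
  have "cnjop ((pauli_op Nq (V m) ^^ j) \<phi>) = (\<lambda>b. of_real (tyr Nq (V m) ^ j) * (pauli_op Nq (V m) ^^ j) (cnjop \<phi>) b)" for j \<phi>
  proof (induction j)
    case 0 then show ?case by simp
  next
    case (Suc j)
    show ?case
      by (simp add: cnjop_pauli' Suc pauli_op_scale mult_ac)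
  qed
  then show ?case
    by (simp add: Suc funpow_scale del: of_real_prod of_real_power; simp add: mult_ac)
qed



lemma mono_pow_zero: "k \<in> multi_indices N \<Longrightarrow> mono_pow N (\<lambda>_. 0) k = (if k = (\<lambda>_. 0) then 1 else 0)"
proof -
  assume k: "k \<in> multi_indices N"
  show ?thesis
  proof (cases "k = (\<lambda>_. 0)")
    case True then show ?thesis by (simp add: mono_pow_def)
  next
    case False
    then obtain i where i: "k i \<noteq> 0" by auto
    then have "i < N" using k by (auto simp: multi_indices_def not_less[symmetric])
    then show ?thesis using False i unfolding mono_pow_def
      by (auto intro!: prod_zero bexI[where x=i])
  qed
qed

lemma mono_pow_const0[simp]: "mono_pow N J (\<lambda>_. 0) = 1"
  by (simp add: mono_pow_def)

lemma mono_pow_scale: "mono_pow N (\<lambda>i. c i * J i) k = (\<Prod>i<N. c i ^ k i) * mono_pow N J k"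
  unfolding mono_pow_def by (simp add: power_mult_distrib prod.distrib)

lemma mono_bound:
  fixes J :: "nat \<Rightarrow> real"
  assumes k: "k \<in> multi_indices N" "k \<noteq> (\<lambda>_. 0)" and q: "0 \<le> q" "q \<le> 1" and r: "0 \<le> r"
    and J: "\<forall>i<N. \<bar>J i\<bar> \<le> q * r"
  shows "\<bar>mono_pow N J k\<bar> \<le> q * mono_pow N (\<lambda>_. r) k"
proof -
  obtain i0 where i0: "k i0 \<noteq> 0" using k(2) by auto
  then have i0N: "i0 < N" using k(1) by (auto simp: multi_indices_def not_less[symmetric])
  have "\<bar>mono_pow N J k\<bar> = (\<Prod>i<N. \<bar>J i\<bar> ^ k i)" unfolding mono_pow_def by (simp add: abs_prod power_abs)
  also have "\<dots> \<le> (\<Prod>i<N. (q * r) ^ k i)"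
    by (rule prod_mono) (use J in \<open>auto intro: power_mono\<close>)
  also have "\<dots> = (\<Prod>i<N. q ^ k i) * mono_pow N (\<lambda>_. r) k"
    unfolding mono_pow_def by (simp add: power_mult_distrib prod.distrib)
  also have "(\<Prod>i<N. q ^ k i) \<le> q"
  proof -
    have "(\<Prod>i<N. q ^ k i) = q ^ k i0 * (\<Prod>i\<in>{..<N} - {i0}. q ^ k i)"
      using i0N by (simp add: prod.remove)
    also have "\<dots> \<le> q ^ k i0 * 1"
      by (rule mult_left_mono) (use q in \<open>auto intro!: prod_le_1 power_le_one\<close>)
    also have "\<dots> \<le> q" using q i0 by (simp add: power_le_one_iff) (metis One_nat_def Suc_leI le_less not_gr0 power_decreasing power_one_right)
    finally show ?thesis .
  qed
  then have "(\<Prod>i<N. q ^ k i) * mono_pow N (\<lambda>_. r) k \<le> q * mono_pow N (\<lambda>_. r) k"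
    by (rule mult_right_mono) (use r in \<open>simp add: mono_pow_def prod_nonneg\<close>)
  finally show ?thesis .
qed



lemma sq_norm_pos_nonzero: "sq_norm_state Nq \<phi> = 1 \<Longrightarrow> \<phi> \<noteq> (\<lambda>_. 0)"
  by (auto simp: sq_norm_state_def)

lemma comp_le_1:
  assumes "sq_norm_state Nq \<phi> = 1" "b \<in> bstates Nq"
  shows "cmod (\<phi> b) \<le> 1"
proof -
  have "(cmod (\<phi> b))^2 \<le> sq_norm_state Nq \<phi>" unfolding sq_norm_state_def
    by (rule member_le_sum) (use assms finite_bstates in auto)
  then have "(cmod (\<phi> b))^2 \<le> 1^2" using assms by simp
  then show ?thesis by (rule power2_le_imp_le) simp
qed

lemma sq_norm_ket0: "sq_norm_state Nq ket0 = 1"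
proof -
  have "sq_norm_state Nq ket0 = (\<Sum>b\<in>bstates Nq. if b = zero_bstate then 1 else 0)"
    unfolding sq_norm_state_def ket0_def by (intro sum.cong) auto
  also have "\<dots> = 1" using finite_bstates by simp
  finally show ?thesis .
qed

lemma ham_zero_J: "ham_op Nq Nc h V (\<lambda>_. 0) \<psi> = (\<lambda>b. of_real (H0c Nq h b) * \<psi> b)"
  by (simp add: ham_op_alt[abs_def])

lemma has_sum_delta:
  fixes x :: "'a::{comm_monoid_add,topological_space}"
  shows "k0 \<in> A \<Longrightarrow> ((\<lambda>k. if k = k0 then x else 0) has_sum x) A"
proof -
  assume k0: "k0 \<in> A"
  have "((\<lambda>k. if k = k0 then x else 0) has_sum x) {k0}"
    using has_sum_finite[of "{k0}" "\<lambda>k. if k = k0 then x else 0"] by simp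
  moreover have "((\<lambda>k. if k = k0 then x else 0) has_sum x) A \<longleftrightarrow> ((\<lambda>k. if k = k0 then x else 0) has_sum x) {k0}"
    by (rule has_sum_cong_neutral) (use k0 in auto)
  ultimately show ?thesis by simp
qed

locale setting =
  fixes Nq Nc :: nat and h :: "nat \<Rightarrow> real" and V :: "nat \<Rightarrow> nat \<Rightarrow> pauli"
    and E0 :: "(nat \<Rightarrow> real) \<Rightarrow> qstate" and \<Psi> :: "(nat \<Rightarrow> nat) \<Rightarrow> qstate"
    and \<epsilon> :: real
  assumes h_pos: "\<forall>n<Nq. h n > 0"
    and eps: "\<epsilon> > 0"
    and ground: "\<forall>J. (\<forall>i<Nc. \<bar>J i\<bar> < \<epsilon>) \<longrightarrow>
        is_ground_state Nq (ham_op Nq Nc h V J) (E0 J) \<and>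
        Im (E0 J zero_bstate) = 0 \<and> Re (E0 J zero_bstate) > 0"
    and taylor: "\<forall>J. (\<forall>i<Nc. \<bar>J i\<bar> < \<epsilon>) \<longrightarrow>
        (\<forall>b. ((\<lambda>k. of_real (mono_pow Nc J k) * \<Psi> k b) has_sum E0 J b) (multi_indices Nc))"
begin

definition hm :: real where "hm = Min (insert 1 (h ` {..<Nq}))"

lemma hm_pos: "hm > 0"
  unfolding hm_def using h_pos by (subst Min_gr_iff) auto

lemma hm_le: "\<forall>n<Nq. hm \<le> h n"
  unfolding hm_def by auto

lemma groundD: "\<forall>i<Nc. \<bar>J i\<bar> < \<epsilon> \<Longrightarrow> is_ground_state Nq (ham_op Nq Nc h V J) (E0 J) \<and>
        Im (E0 J zero_bstate) = 0 \<and> Re (E0 J zero_bstate) > 0"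
  using ground by blast

lemma taylorD: "\<forall>i<Nc. \<bar>J i\<bar> < \<epsilon> \<Longrightarrow> ((\<lambda>k. of_real (mono_pow Nc J k) * \<Psi> k b) has_sum E0 J b) (multi_indices Nc)"
  using taylor by blast

abbreviation H where "H J \<equiv> ham_op Nq Nc h V J"

lemma E0_zero: "E0 (\<lambda>_. 0) = ket0"
proof -
  have "\<forall>i<Nc. \<bar>(\<lambda>_. 0::real) i\<bar> < \<epsilon>" using eps by simp
  from groundD[OF this] obtain E where
    g: "supported Nq (E0 (\<lambda>_. 0))" "sq_norm_state Nq (E0 (\<lambda>_. 0)) = 1"
       "H (\<lambda>_. 0) (E0 (\<lambda>_. 0)) = (\<lambda>b. of_real E * E0 (\<lambda>_. 0) b)"
       "Im (E0 (\<lambda>_. 0) zero_bstate) = 0" "Re (E0 (\<lambda>_. 0) zero_bstate) > 0"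
    unfolding is_ground_state_def by blast
  have "E0 (\<lambda>_. 0) zero_bstate \<noteq> 0" using g(5) by auto
  moreover have "of_real (H0c Nq h zero_bstate) * E0 (\<lambda>_. 0) zero_bstate = of_real E * E0 (\<lambda>_. 0) zero_bstate"
    using fun_cong[OF g(3), of zero_bstate] by (simp only: ham_zero_J)
  ultimately have "complex_of_real (H0c Nq h zero_bstate) = of_real E" by simp
  then have EE: "E = - (\<Sum>n<Nq. h n)" unfolding of_real_eq_iff H0c_zero by simp
  have k: "H (\<lambda>_. 0) ket0 = (\<lambda>b. of_real E * ket0 b)"
    by (rule ext) (simp add: ham_zero_J EE ket0_def H0c_zero)
  show ?thesis
    by (rule eig_unique[OF hm_le hm_pos g(1) ket0_supported g(2) sq_norm_ket0 g(3) k])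
       (use EE hm_pos g in \<open>auto simp: ket0_def\<close>)
qed

lemma Psi0: "\<Psi> (\<lambda>_. 0) b = E0 (\<lambda>_. 0) b"
proof -
  have "\<forall>i<Nc. \<bar>(\<lambda>_. 0::real) i\<bar> < \<epsilon>" using eps by simp
  from taylorD[OF this, of b]
  have "((\<lambda>k. of_real (mono_pow Nc (\<lambda>_. 0) k) * \<Psi> k b) has_sum E0 (\<lambda>_. 0) b) (multi_indices Nc)" .
  moreover have "((\<lambda>k. of_real (mono_pow Nc (\<lambda>_. 0) k) * \<Psi> k b) has_sum E0 (\<lambda>_. 0) b) (multi_indices Nc)
     \<longleftrightarrow> ((\<lambda>k. of_real (mono_pow Nc (\<lambda>_. 0) k) * \<Psi> k b) has_sum E0 (\<lambda>_. 0) b) {\<lambda>_. 0}"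
    by (rule has_sum_cong_neutral) (auto simp: mono_pow_zero multi_indices_def)
  ultimately have "((\<lambda>k. of_real (mono_pow Nc (\<lambda>_. 0) k) * \<Psi> k b) has_sum E0 (\<lambda>_. 0) b) {\<lambda>_. 0}" by simp
  moreover have "((\<lambda>k. of_real (mono_pow Nc (\<lambda>_. 0) k) * \<Psi> k b) has_sum \<Psi> (\<lambda>_. 0) b) {\<lambda>_. 0}"
    using has_sum_finite[of "{\<lambda>_. 0}" "\<lambda>k. of_real (mono_pow Nc (\<lambda>_. 0) k) * \<Psi> k b"] by simp
  ultimately show ?thesis using has_sum_unique by metis
qed

definition \<rho> :: real where "\<rho> = \<epsilon> / 2"
definition fc :: "(nat \<Rightarrow> nat) \<Rightarrow> complex" where
  "fc k = of_real (mono_pow Nc (\<lambda>_. \<rho>) k) * \<Psi> k zero_bstate"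
definition MM :: real where "MM = infsum (\<lambda>k. norm (fc k)) (multi_indices Nc)"
definition \<delta> :: real where "\<delta> = min \<rho> (min (\<rho> / (2 * (MM + 1))) (hm / (3 * (real Nc + 1))))"

lemma rho_pos: "\<rho> > 0" using eps by (simp add: \<rho>_def)

lemma fc_abs: "(\<lambda>k. norm (fc k)) summable_on multi_indices Nc"
proof -
  have "\<forall>i<Nc. \<bar>(\<lambda>_. \<rho>) i\<bar> < \<epsilon>" using eps rho_pos by (simp add: \<rho>_def)
  from taylorD[OF this, of zero_bstate] have "fc summable_on multi_indices Nc"
    unfolding fc_def[abs_def] using has_sum_imp_summable by blast
  then show ?thesis using summable_on_iff_abs_summable_on_complex by blast
qed

lemma MM_nonneg: "MM \<ge> 0" unfolding MM_def by (rule infsum_nonneg) simp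

lemma delta_pos: "\<delta> > 0"
  unfolding \<delta>_def using rho_pos MM_nonneg hm_pos by (simp add: add_pos_nonneg)

lemma delta_le_rho: "\<delta> \<le> \<rho>" unfolding \<delta>_def by simp

lemma delta_lt_eps: "\<delta> < \<epsilon>" using delta_le_rho eps by (simp add: \<rho>_def)

lemma box_eps: "\<forall>i<Nc. \<bar>J i\<bar> < \<delta> \<Longrightarrow> \<forall>i<Nc. \<bar>J i\<bar> < \<epsilon>"
  using delta_lt_eps by force

lemma near1:
  assumes J: "\<forall>i<Nc. \<bar>J i\<bar> < \<delta>"
  shows "Re (E0 J zero_bstate) \<ge> 1/2"
proof -
  define q where "q = \<delta> / \<rho>"
  have q0: "0 \<le> q" "q \<le> 1" using delta_pos rho_pos delta_le_rho by (auto simp: q_def)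
  have Jq: "\<forall>i<Nc. \<bar>J i\<bar> \<le> q * \<rho>" using J rho_pos by (auto simp: q_def less_imp_le)
  define z where "z = zero_bstate"
  define g where "g k = of_real (mono_pow Nc J k) * \<Psi> k z - (if k = (\<lambda>_. 0) then \<Psi> (\<lambda>_. 0) z else 0)" for k
  have hs1: "((\<lambda>k. of_real (mono_pow Nc J k) * \<Psi> k z) has_sum E0 J z) (multi_indices Nc)"
    using taylorD[OF box_eps[OF J]] by blast
  have hs2: "((\<lambda>k. - (if k = (\<lambda>_. 0) then \<Psi> (\<lambda>_. 0) z else 0)) has_sum - \<Psi> (\<lambda>_. 0) z) (multi_indices Nc)"
    unfolding has_sum_uminus by simp (rule has_sum_delta, simp add: multi_indices_def)
  have hsg: "(g has_sum (E0 J z - \<Psi> (\<lambda>_. 0) z)) (multi_indices Nc)"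
    using has_sum_add[OF hs1 hs2] unfolding g_def by simp
  have bnd: "norm (g k) \<le> norm (of_real q * fc k)" if k: "k \<in> multi_indices Nc" for k
  proof (cases "k = (\<lambda>_. 0)")
    case True then show ?thesis by (simp add: g_def)
  next
    case False
    have mb: "\<bar>mono_pow Nc J k\<bar> \<le> q * mono_pow Nc (\<lambda>_. \<rho>) k"
      by (rule mono_bound[OF k False q0 _ Jq]) (use rho_pos in simp)
    have nn: "0 \<le> mono_pow Nc (\<lambda>_. \<rho>) k" using rho_pos by (simp add: mono_pow_def prod_nonneg)
    have "norm (g k) = \<bar>mono_pow Nc J k\<bar> * cmod (\<Psi> k z)" using False by (simp add: g_def norm_mult)
    also have "\<dots> \<le> q * mono_pow Nc (\<lambda>_. \<rho>) k * cmod (\<Psi> k z)" by (rule mult_right_mono[OF mb]) simp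
    also have "\<dots> = norm (of_real q * fc k)" using q0 nn by (simp add: fc_def norm_mult z_def abs_mult)
    finally show ?thesis .
  qed
  have qfc: "(\<lambda>k. norm (of_real q * fc k)) summable_on multi_indices Nc"
    using summable_on_cmult_right[OF fc_abs, of "\<bar>q\<bar>"] by (simp add: norm_mult)
  have gabs: "(\<lambda>k. norm (g k)) summable_on multi_indices Nc"
    by (rule Infinite_Sum.abs_summable_on_comparison_test[OF qfc bnd])
  have "norm (E0 J z - \<Psi> (\<lambda>_. 0) z) = norm (infsum g (multi_indices Nc))"
    using hsg infsumI by metis
  also have "\<dots> \<le> infsum (\<lambda>k. norm (g k)) (multi_indices Nc)" by (rule norm_infsum_bound[OF gabs])
  also have "\<dots> \<le> infsum (\<lambda>k. norm (of_real q * fc k)) (multi_indices Nc)"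
    by (rule infsum_mono[OF gabs qfc bnd])
  also have "\<dots> = q * MM" unfolding MM_def using q0
    by (simp add: norm_mult infsum_cmult_right fc_abs)
  also have "\<dots> \<le> 1/2"
  proof -
    have d1: "\<delta> \<le> \<rho> / (2 * (MM + 1))" unfolding \<delta>_def by simp
    have "q \<le> (\<rho> / (2 * (MM + 1))) / \<rho>" unfolding q_def
      by (rule divide_right_mono[OF d1]) (use rho_pos in simp)
    also have "\<dots> = 1 / (2 * (MM + 1))" using rho_pos by simp
    finally have "q \<le> 1 / (2 * (MM + 1))" .
    then have "q * MM \<le> MM / (2 * (MM + 1))" using MM_nonneg by (metis mult_right_mono times_divide_eq_left mult_1)
    also have "\<dots> \<le> 1/2" using MM_nonneg by (simp add: divide_simps)
    finally show ?thesis .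
  qed
  finally have le: "cmod (E0 J z - 1) \<le> 1/2" using Psi0 E0_zero by (simp add: ket0_def z_def)
  have "Re (E0 J z) = 1 + Re (E0 J z - 1)" by simp
  moreover have "- Re (E0 J z - 1) \<le> cmod (E0 J z - 1)" using abs_Re_le_cmod[of "E0 J z - 1"] by linarith
  ultimately show ?thesis using le unfolding z_def by linarith
qed

end


lemma Zop_supported: "supported Nq \<psi> \<Longrightarrow> supported Nq (Zop n \<psi>)"
  by (simp add: supported_def Zop_def)
lemma cnjop_supported: "supported Nq \<psi> \<Longrightarrow> supported Nq (cnjop \<psi>)"
  by (simp add: supported_def cnjop_def)
lemma norm_sgnb[simp]: "cmod (sgnb x) = 1" by (simp add: sgnb_def)
lemma Zop_norm: "sq_norm_state Nq (Zop n \<psi>) = sq_norm_state Nq \<psi>"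
  by (simp add: sq_norm_state_def Zop_def norm_mult)
lemma cnjop_norm: "sq_norm_state Nq (cnjop \<psi>) = sq_norm_state Nq \<psi>"
  by (simp add: sq_norm_state_def cnjop_def)
lemma Zop_invol[simp]: "Zop n (Zop n \<psi>) = \<psi>"
  by (simp add: Zop_def mult.assoc[symmetric])
lemma cnjop_invol[simp]: "cnjop (cnjop \<psi>) = \<psi>"
  by (simp add: cnjop_def)
lemma Zop_nz: "\<psi> \<noteq> (\<lambda>_. 0) \<Longrightarrow> Zop n \<psi> \<noteq> (\<lambda>_. 0)"
  by (auto simp: Zop_def fun_eq_iff sgnb_def)
lemma cnjop_nz: "\<psi> \<noteq> (\<lambda>_. 0) \<Longrightarrow> cnjop \<psi> \<noteq> (\<lambda>_. 0)"
  by (auto simp: cnjop_def fun_eq_iff)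
lemma Zop_zero[simp]: "Zop n \<psi> zero_bstate = \<psi> zero_bstate"
  by (simp add: Zop_def zero_bstate_def sgnb_def)

context setting
begin

lemma E_bound:
  assumes J: "\<forall>i<Nc. \<bar>J i\<bar> < \<delta>" and e: "H J (E0 J) = (\<lambda>b. of_real E * E0 J b)"
  shows "E + (\<Sum>n<Nq. h n) + (\<Sum>i<Nc. \<bar>J i\<bar>) < 2 * hm"
proof -
  define z where "z = zero_bstate"
  define a where "a = Re (E0 J z)"
  define SJ where "SJ = (\<Sum>i<Nc. \<bar>J i\<bar>)"
  have g: "is_ground_state Nq (H J) (E0 J)" "Im (E0 J z) = 0" using groundD[OF box_eps[OF J]] z_def by auto
  have nrm: "sq_norm_state Nq (E0 J) = 1" using g unfolding is_ground_state_def by blast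
  have a2: "a \<ge> 1/2" using near1[OF J] a_def z_def by simp
  have pa: "E0 J z = of_real a" using g(2) a_def complex_eq_iff by auto
  have eq: "of_real ((E + (\<Sum>n<Nq. h n)) * a) = (\<Sum>i<Nc. of_real (J i) * pauli_op Nq (V i) (E0 J) z)"
    using fun_cong[OF e, of z] unfolding ham_op_alt z_def H0c_zero
    by (simp add: pa[unfolded z_def] algebra_simps)
  have "\<bar>(E + (\<Sum>n<Nq. h n)) * a\<bar> = norm (complex_of_real ((E + (\<Sum>n<Nq. h n)) * a))"
    by (simp only: norm_of_real)
  also have "\<dots> = norm (\<Sum>i<Nc. of_real (J i) * pauli_op Nq (V i) (E0 J) z)" by (simp only: eq)
  also have "\<dots> \<le> (\<Sum>i<Nc. norm (of_real (J i) * pauli_op Nq (V i) (E0 J) z))" by (rule norm_sum)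
  also have "\<dots> \<le> (\<Sum>i<Nc. \<bar>J i\<bar> * 1)"
  proof (rule sum_mono)
    fix i assume "i \<in> {..<Nc}"
    have c1: "cmod (E0 J (flip_bits Nq (V i) z)) \<le> 1"
      by (rule comp_le_1[OF nrm]) (simp add: z_def flip_in_bstates)
    show "norm (of_real (J i) * pauli_op Nq (V i) (E0 J) z) \<le> \<bar>J i\<bar> * 1"
      using mult_left_mono[OF c1 abs_ge_zero[of "J i"]] by (simp add: norm_mult norm_pauli_op)
  qed
  finally have b1: "(E + (\<Sum>n<Nq. h n)) * a \<le> SJ" unfolding SJ_def by simp
  have b2: "E + (\<Sum>n<Nq. h n) \<le> 2 * SJ"
  proof (cases "E + (\<Sum>n<Nq. h n) \<ge> 0")
    case True
    have "(E + (\<Sum>n<Nq. h n)) * (1/2) \<le> (E + (\<Sum>n<Nq. h n)) * a" by (rule mult_left_mono[OF a2 True])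
    then show ?thesis using b1 by simp
  next
    case False
    have "SJ \<ge> 0" unfolding SJ_def by (simp add: sum_nonneg)
    then show ?thesis using False by simp
  qed
  have "SJ \<le> real (card {..<Nc}) * \<delta>" unfolding SJ_def
    by (rule sum_bounded_above) (use J in auto)
  then have s1: "SJ \<le> real Nc * \<delta>" by simp
  define X where "X = (real Nc + 1) * \<delta>"
  have s2: "real Nc * \<delta> \<le> X" unfolding X_def using delta_pos by (simp add: distrib_right)
  have "\<delta> \<le> hm / (3 * (real Nc + 1))" unfolding \<delta>_def by simp
  then have s3: "3 * X \<le> hm" unfolding X_def by (simp add: field_simps)
  have "3 * SJ < 2 * hm" using s1 s2 s3 hm_pos by linarith
  then show ?thesis using b2 unfolding SJ_def by linarith
qed

lemma ground_uniq:
  assumes J: "\<forall>i<Nc. \<bar>J i\<bar> < \<delta>" and g: "is_ground_state Nq (H J) \<phi>"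
    and z: "Im (\<phi> zero_bstate) = 0" "Re (\<phi> zero_bstate) > 0"
  shows "\<phi> = E0 J"
proof -
  have g0: "is_ground_state Nq (H J) (E0 J)" "Im (E0 J zero_bstate) = 0" "Re (E0 J zero_bstate) > 0"
    using groundD[OF box_eps[OF J]] by auto
  obtain E1 where e1: "supported Nq \<phi>" "sq_norm_state Nq \<phi> = 1" "H J \<phi> = (\<lambda>b. of_real E1 * \<phi> b)"
     "\<And>\<mu> \<phi>'. supported Nq \<phi>' \<and> \<phi>' \<noteq> (\<lambda>_. 0) \<and> H J \<phi>' = (\<lambda>b. \<mu> * \<phi>' b) \<Longrightarrow> E1 \<le> Re \<mu>"
    using g unfolding is_ground_state_def by blast
  obtain E2 where e2: "supported Nq (E0 J)" "sq_norm_state Nq (E0 J) = 1" "H J (E0 J) = (\<lambda>b. of_real E2 * E0 J b)"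
     "\<And>\<mu> \<phi>'. supported Nq \<phi>' \<and> \<phi>' \<noteq> (\<lambda>_. 0) \<and> H J \<phi>' = (\<lambda>b. \<mu> * \<phi>' b) \<Longrightarrow> E2 \<le> Re \<mu>"
    using g0(1) unfolding is_ground_state_def by blast
  have "E1 \<le> E2" using e1(4)[of "E0 J" "of_real E2"] e2 sq_norm_pos_nonzero by auto
  moreover have "E2 \<le> E1" using e2(4)[of \<phi> "of_real E1"] e1 sq_norm_pos_nonzero by auto
  ultimately have EE: "E1 = E2" by simp
  have e1': "H J \<phi> = (\<lambda>b. of_real E2 * \<phi> b)" using e1(3) EE by simp
  show ?thesis
    by (rule eig_unique[OF hm_le hm_pos e1(1) e2(1) e1(2) e2(2) e1' e2(3) E_bound[OF J e2(3)] z g0(2) g0(3)])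
qed

end


context setting
begin

lemma box_scale: "\<forall>i<Nc. \<bar>J i\<bar> < \<delta> \<Longrightarrow> (\<And>i. \<bar>c i\<bar> = 1) \<Longrightarrow> \<forall>i<Nc. \<bar>c i * J i\<bar> < \<delta>"
  by (simp add: abs_mult)

lemma Z_sym:
  assumes n: "n < Nq" and J: "\<forall>i<Nc. \<bar>J i\<bar> < \<delta>"
  shows "Zop n (E0 J) = E0 (\<lambda>i. fzr n (V i) * J i)"
proof -
  define J' where "J' = (\<lambda>i. fzr n (V i) * J i)"
  have J'b: "\<forall>i<Nc. \<bar>J' i\<bar> < \<delta>" unfolding J'_def by (rule box_scale[OF J]) simp
  have JJ: "(\<lambda>i. fzr n (V i) * J' i) = J" unfolding J'_def by (simp add: mult.assoc[symmetric])
  have g0: "is_ground_state Nq (H J) (E0 J)" "Im (E0 J zero_bstate) = 0" "Re (E0 J zero_bstate) > 0"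
    using groundD[OF box_eps[OF J]] by auto
  obtain E where e: "supported Nq (E0 J)" "sq_norm_state Nq (E0 J) = 1" "H J (E0 J) = (\<lambda>b. of_real E * E0 J b)"
     "\<And>\<mu> \<phi>'. supported Nq \<phi>' \<and> \<phi>' \<noteq> (\<lambda>_. 0) \<and> H J \<phi>' = (\<lambda>b. \<mu> * \<phi>' b) \<Longrightarrow> E \<le> Re \<mu>"
    using g0(1) unfolding is_ground_state_def by blast
  have "is_ground_state Nq (H J') (Zop n (E0 J))"
    unfolding is_ground_state_def
  proof (intro conjI exI[of _ E] allI impI)
    show "supported Nq (Zop n (E0 J))" using Zop_supported e(1) by blast
    show "sq_norm_state Nq (Zop n (E0 J)) = 1" using Zop_norm e(2) by simp
    show "H J' (Zop n (E0 J)) = (\<lambda>b. of_real E * Zop n (E0 J) b)"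
      unfolding ham_Zop[OF n] JJ e(3) Zop_scale ..
    fix \<mu> \<phi> assume a: "supported Nq \<phi> \<and> \<phi> \<noteq> (\<lambda>_. 0) \<and> H J' \<phi> = (\<lambda>b. \<mu> * \<phi> b)"
    have "H J (Zop n \<phi>) = (\<lambda>b. \<mu> * Zop n \<phi> b)"
      using a unfolding ham_Zop[OF n] J'_def[symmetric] by (simp add: Zop_scale)
    then show "E \<le> Re \<mu>" using e(4)[of "Zop n \<phi>" \<mu>] a Zop_supported Zop_nz by blast
  qed
  then show ?thesis unfolding J'_def[symmetric]
    by (rule ground_uniq[OF J'b]) (use g0 in auto)
qed

lemma C_sym:
  assumes J: "\<forall>i<Nc. \<bar>J i\<bar> < \<delta>"
  shows "cnjop (E0 J) = E0 (\<lambda>i. tyr Nq (V i) * J i)"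
proof -
  define J' where "J' = (\<lambda>i. tyr Nq (V i) * J i)"
  have J'b: "\<forall>i<Nc. \<bar>J' i\<bar> < \<delta>" unfolding J'_def by (rule box_scale[OF J]) simp
  have JJ: "(\<lambda>i. tyr Nq (V i) * J' i) = J" unfolding J'_def by (simp add: mult.assoc[symmetric])
  have g0: "is_ground_state Nq (H J) (E0 J)" "Im (E0 J zero_bstate) = 0" "Re (E0 J zero_bstate) > 0"
    using groundD[OF box_eps[OF J]] by auto
  obtain E where e: "supported Nq (E0 J)" "sq_norm_state Nq (E0 J) = 1" "H J (E0 J) = (\<lambda>b. of_real E * E0 J b)"
     "\<And>\<mu> \<phi>'. supported Nq \<phi>' \<and> \<phi>' \<noteq> (\<lambda>_. 0) \<and> H J \<phi>' = (\<lambda>b. \<mu> * \<phi>' b) \<Longrightarrow> E \<le> Re \<mu>"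
    using g0(1) unfolding is_ground_state_def by blast
  have "is_ground_state Nq (H J') (cnjop (E0 J))"
    unfolding is_ground_state_def
  proof (intro conjI exI[of _ E] allI impI)
    show "supported Nq (cnjop (E0 J))" using cnjop_supported e(1) by blast
    show "sq_norm_state Nq (cnjop (E0 J)) = 1" using cnjop_norm e(2) by simp
    show "H J' (cnjop (E0 J)) = (\<lambda>b. of_real E * cnjop (E0 J) b)"
      unfolding J'_def ham_cnj[symmetric] e(3) cnjop_scale by simp
    fix \<mu> \<phi> assume a: "supported Nq \<phi> \<and> \<phi> \<noteq> (\<lambda>_. 0) \<and> H J' \<phi> = (\<lambda>b. \<mu> * \<phi> b)"
    have "H J (cnjop \<phi>) = cnjop (H J' \<phi>)" unfolding ham_cnj JJ ..
    then have "H J (cnjop \<phi>) = (\<lambda>b. cnj \<mu> * cnjop \<phi> b)"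
      using a cnjop_scale by simp
    then have "E \<le> Re (cnj \<mu>)" using e(4)[of "cnjop \<phi>" "cnj \<mu>"] a cnjop_supported cnjop_nz by blast
    then show "E \<le> Re \<mu>" by simp
  qed
  then show ?thesis unfolding J'_def[symmetric]
    by (rule ground_uniq[OF J'b]) (use g0 in \<open>auto simp: cnjop_def\<close>)
qed

lemma coeff_eq:
  fixes c1 c2 :: "(nat \<Rightarrow> nat) \<Rightarrow> complex" and A :: "(nat \<Rightarrow> real) \<Rightarrow> complex"
  assumes a1: "\<And>J. \<forall>i<Nc. \<bar>J i\<bar> < \<delta> \<Longrightarrow>
     ((\<lambda>k. of_real (mono_pow Nc J k) * c1 k) has_sum A J) (multi_indices Nc)"
   and a2: "\<And>J. \<forall>i<Nc. \<bar>J i\<bar> < \<delta> \<Longrightarrow>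
     ((\<lambda>k. of_real (mono_pow Nc J k) * c2 k) has_sum A J) (multi_indices Nc)"
  shows "\<forall>k\<in>multi_indices Nc. c1 k = c2 k"
proof -
  have "\<forall>k\<in>multi_indices Nc. c1 k - c2 k = 0"
  proof (rule multi_uniq[OF delta_pos])
    fix J :: "nat \<Rightarrow> real" assume J: "\<forall>i<Nc. \<bar>J i\<bar> < \<delta>"
    from a1[OF J] a2[OF J] have h1: "((\<lambda>k. of_real (mono_pow Nc J k) * c1 k) has_sum A J) (multi_indices Nc)"
      and h2: "((\<lambda>k. - (of_real (mono_pow Nc J k) * c2 k)) has_sum - A J) (multi_indices Nc)"
      by (auto simp: has_sum_uminus)
    from has_sum_add[OF h1 h2]
    show "((\<lambda>k. of_real (mono_pow Nc J k) * (c1 k - c2 k)) has_sum 0) (multi_indices Nc)"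
      by (simp add: algebra_simps)
  qed
  then show ?thesis by simp
qed

lemma RZ:
  assumes n: "n < Nq"
  shows "\<forall>k\<in>multi_indices Nc. sgnb (b n) * \<Psi> k b = of_real (\<Prod>i<Nc. fzr n (V i) ^ k i) * \<Psi> k b"
proof (rule coeff_eq[where A = "\<lambda>J. E0 (\<lambda>i. fzr n (V i) * J i) b"])
  fix J :: "nat \<Rightarrow> real" assume J: "\<forall>i<Nc. \<bar>J i\<bar> < \<delta>"
  define J' where "J' = (\<lambda>i. fzr n (V i) * J i)"
  have J'b: "\<forall>i<Nc. \<bar>J' i\<bar> < \<delta>" unfolding J'_def by (rule box_scale[OF J]) simp
  have "((\<lambda>k. sgnb (b n) * (of_real (mono_pow Nc J k) * \<Psi> k b)) has_sum sgnb (b n) * E0 J b) (multi_indices Nc)"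
    by (rule has_sum_cmult_right[OF taylorD[OF box_eps[OF J]]])
  moreover have "sgnb (b n) * E0 J b = E0 J' b"
    using fun_cong[OF Z_sym[OF n J], of b] unfolding J'_def Zop_def by simp
  ultimately show "((\<lambda>k. of_real (mono_pow Nc J k) * (sgnb (b n) * \<Psi> k b)) has_sum E0 (\<lambda>i. fzr n (V i) * J i) b) (multi_indices Nc)"
    by (simp add: mult_ac J'_def)
next
  fix J :: "nat \<Rightarrow> real" assume J: "\<forall>i<Nc. \<bar>J i\<bar> < \<delta>"
  define J' where "J' = (\<lambda>i. fzr n (V i) * J i)"
  have J'b: "\<forall>i<Nc. \<bar>J' i\<bar> < \<delta>" unfolding J'_def by (rule box_scale[OF J]) simp
  have "((\<lambda>k. of_real (mono_pow Nc J' k) * \<Psi> k b) has_sum E0 J' b) (multi_indices Nc)"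
    by (rule taylorD[OF box_eps[OF J'b]])
  then show "((\<lambda>k. of_real (mono_pow Nc J k) * (of_real (\<Prod>i<Nc. fzr n (V i) ^ k i) * \<Psi> k b)) has_sum E0 (\<lambda>i. fzr n (V i) * J i) b) (multi_indices Nc)"
    unfolding J'_def mono_pow_scale by (simp add: mult_ac)
qed

lemma RC:
  shows "\<forall>k\<in>multi_indices Nc. cnj (\<Psi> k b) = of_real (\<Prod>i<Nc. tyr Nq (V i) ^ k i) * \<Psi> k b"
proof (rule coeff_eq[where A = "\<lambda>J. E0 (\<lambda>i. tyr Nq (V i) * J i) b"])
  fix J :: "nat \<Rightarrow> real" assume J: "\<forall>i<Nc. \<bar>J i\<bar> < \<delta>"
  define J' where "J' = (\<lambda>i. tyr Nq (V i) * J i)"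
  have J'b: "\<forall>i<Nc. \<bar>J' i\<bar> < \<delta>" unfolding J'_def by (rule box_scale[OF J]) simp
  have "((\<lambda>k. cnj (of_real (mono_pow Nc J k) * \<Psi> k b)) has_sum cnj (E0 J b)) (multi_indices Nc)"
    using taylorD[OF box_eps[OF J]] by (simp only: has_sum_cnj_iff)
  moreover have "cnj (E0 J b) = E0 J' b"
    using fun_cong[OF C_sym[OF J], of b] unfolding J'_def cnjop_def by simp
  ultimately show "((\<lambda>k. of_real (mono_pow Nc J k) * cnj (\<Psi> k b)) has_sum E0 (\<lambda>i. tyr Nq (V i) * J i) b) (multi_indices Nc)"
    by (simp add: J'_def)
next
  fix J :: "nat \<Rightarrow> real" assume J: "\<forall>i<Nc. \<bar>J i\<bar> < \<delta>"
  define J' where "J' = (\<lambda>i. tyr Nq (V i) * J i)"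
  have J'b: "\<forall>i<Nc. \<bar>J' i\<bar> < \<delta>" unfolding J'_def by (rule box_scale[OF J]) simp
  have "((\<lambda>k. of_real (mono_pow Nc J' k) * \<Psi> k b) has_sum E0 J' b) (multi_indices Nc)"
    by (rule taylorD[OF box_eps[OF J'b]])
  then show "((\<lambda>k. of_real (mono_pow Nc J k) * (of_real (\<Prod>i<Nc. tyr Nq (V i) ^ k i) * \<Psi> k b)) has_sum E0 (\<lambda>i. tyr Nq (V i) * J i) b) (multi_indices Nc)"
    unfolding J'_def mono_pow_scale by (simp add: mult_ac)
qed

lemma RS:
  assumes b: "b \<notin> bstates Nq"
  shows "\<forall>k\<in>multi_indices Nc. \<Psi> k b = 0"
proof (rule coeff_eq[where A = "\<lambda>_. 0"])
  fix J :: "nat \<Rightarrow> real" assume J: "\<forall>i<Nc. \<bar>J i\<bar> < \<delta>"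
  have "supported Nq (E0 J)" using groundD[OF box_eps[OF J]] unfolding is_ground_state_def by blast
  then have "E0 J b = 0" using b unfolding supported_def by blast
  then show "((\<lambda>k. of_real (mono_pow Nc J k) * \<Psi> k b) has_sum 0) (multi_indices Nc)"
    using taylorD[OF box_eps[OF J], of b] by simp
next
  fix J :: "nat \<Rightarrow> real"
  show "((\<lambda>k. of_real (mono_pow Nc J k) * 0) has_sum 0) (multi_indices Nc)" by simp
qed

end


lemma sgnb_inj: "sgnb x = sgnb y \<Longrightarrow> x = y"
  by (auto simp: sgnb_def split: if_splits)

theorem lemma1:
  fixes Nq Nc :: nat and h :: "nat \<Rightarrow> real" and V :: "nat \<Rightarrow> nat \<Rightarrow> pauli"
    and E0 :: "(nat \<Rightarrow> real) \<Rightarrow> qstate" and \<Psi> :: "(nat \<Rightarrow> nat) \<Rightarrow> qstate"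
    and \<epsilon> :: real
  assumes h_pos: "\<forall>n<Nq. h n > 0"
    and eps: "\<epsilon> > 0"
    and ground: "\<forall>J. (\<forall>i<Nc. \<bar>J i\<bar> < \<epsilon>) \<longrightarrow>
        is_ground_state Nq (ham_op Nq Nc h V J) (E0 J) \<and>
        Im (E0 J zero_bstate) = 0 \<and> Re (E0 J zero_bstate) > 0"
    and taylor: "\<forall>J. (\<forall>i<Nc. \<bar>J i\<bar> < \<epsilon>) \<longrightarrow>
        (\<forall>b. ((\<lambda>k. of_real (mono_pow Nc J k) * \<Psi> k b) has_sum E0 J b) (multi_indices Nc))"
  shows "\<forall>k\<in>multi_indices Nc. \<exists>C::real. \<Psi> k = (\<lambda>b. of_real C * vpow Nq V k Nc ket0 b)"
proof -
  interpret S: setting Nq Nc h V E0 \<Psi> \<epsilon>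
    using h_pos eps ground taylor by unfold_locales
  show ?thesis
  proof
    fix k assume k: "k \<in> multi_indices Nc"
    define w where "w = vpow Nq V k Nc ket0"
    define sk where "sk n = (\<Prod>i<Nc. fzr n (V i) ^ k i)" for n
    define tk where "tk = (\<Prod>i<Nc. tyr Nq (V i) ^ k i)"
    have wZ: "sgnb (b n) * w b = of_real (sk n) * w b" if n: "n < Nq" for n b
      using fun_cong[OF Zop_vpow[OF n, of V k Nc ket0], of b] unfolding Zop_ket0
      unfolding Zop_def w_def sk_def by simp
    have wC: "cnj (w b) = of_real tk * w b" for b
      using fun_cong[OF cnjop_vpow[of Nq V k Nc ket0], of b] unfolding cnjop_ket0
      unfolding cnjop_def w_def tk_def by simp
    have wS: "supported Nq w" unfolding w_def by (rule vpow_supported[OF ket0_supported])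
    have "ket0 \<noteq> (\<lambda>_. 0)" by (auto simp: ket0_def fun_eq_iff)
    then have wnz: "w \<noteq> (\<lambda>_. 0)" unfolding w_def by (rule vpow_nonzero)
    then obtain b0 where b0: "w b0 \<noteq> 0" by auto
    have PZ: "sgnb (b n) * \<Psi> k b = of_real (sk n) * \<Psi> k b" if "n < Nq" for n b
      using S.RZ[OF that, of b] k unfolding sk_def by blast
    have PC: "cnj (\<Psi> k b) = of_real tk * \<Psi> k b" for b
      using S.RC[of b] k unfolding tk_def by blast
    have PS: "b \<notin> bstates Nq \<Longrightarrow> \<Psi> k b = 0" for b
      using S.RS[of b] k by blast
    have uniq: "b = b0" if "b \<in> bstates Nq" "\<forall>n<Nq. sgnb (b n) = of_real (sk n)" for b
    proof -
      have b0S: "b0 \<in> bstates Nq" using b0 wS unfolding supported_def by blast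
      have "\<forall>n<Nq. sgnb (b0 n) = of_real (sk n)" using wZ b0 by auto
      then have "b n = b0 n" for n
      proof (cases "n < Nq")
        case True
        then show ?thesis using that(2) \<open>\<forall>n<Nq. sgnb (b0 n) = of_real (sk n)\<close> sgnb_inj by metis
      next
        case False
        then show ?thesis using that(1) b0S by (simp add: bstates_def)
      qed
      then show ?thesis by auto
    qed
    have wsupp: "w b = 0" if "b \<noteq> b0" for b
    proof (rule ccontr)
      assume nz: "w b \<noteq> 0"
      then have "b \<in> bstates Nq" using wS unfolding supported_def by blast
      moreover have "\<forall>n<Nq. sgnb (b n) = of_real (sk n)" using wZ nz by auto
      ultimately show False using uniq that by blast
    qed
    have Psupp: "\<Psi> k b = 0" if "b \<noteq> b0" for b
    proof (rule ccontr)
      assume nz: "\<Psi> k b \<noteq> 0"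
      then have "b \<in> bstates Nq" using PS by blast
      moreover have "\<forall>n<Nq. sgnb (b n) = of_real (sk n)" using PZ nz by auto
      ultimately show False using uniq that by blast
    qed
    have tk0: "tk \<noteq> 0"
    proof -
      have "\<bar>tk\<bar> = 1" unfolding tk_def abs_prod power_abs by simp
      then show ?thesis by auto
    qed
    define r where "r = \<Psi> k b0 / w b0"
    have cr: "cnj r = r" unfolding r_def complex_cnj_divide PC wC using tk0 by simp
    have "Im r = 0" using arg_cong[OF cr, of Im] by simp
    then have rr: "r = of_real (Re r)" by (simp add: complex_eq_iff)
    show "\<exists>C::real. \<Psi> k = (\<lambda>b. of_real C * vpow Nq V k Nc ket0 b)"
    proof (intro exI ext)
      fix b
      show "\<Psi> k b = of_real (Re r) * vpow Nq V k Nc ket0 b"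
      proof (cases "b = b0")
        case True
        then show ?thesis using b0 rr[symmetric] unfolding w_def[symmetric] r_def by simp
      next
        case False
        then show ?thesis using wsupp Psupp unfolding w_def[symmetric] by simp
      qed
    qed
  qed
qed


end
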